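(* Let $X$ be a proper geodesic metric space, $e\in X$ and $N$ a Morse gauge. There exists $K_2>0$ depending only on $N$ such that: if $\lambda_-,\lambda_+\in\partial X^{(N)}_e$ are distinct and $\gamma,\gamma':(-\infty,\infty)\to X$ are geodesics, with $\gamma(0),\gamma'(0)$ closest points to $e$ along $\gamma,\gamma'$ respectively, both bi-asymptotic to $(\lambda_-,\lambda_+)$, then $d_{Haus}(\gamma,\gamma')<K_2$.
   Context: A Morse gauge is a function $N:\mathbb{R}_{\geq 1}\times\mathbb{R}_{\geq 0}\to\mathbb{R}_{\geq 0}$; a (quasi)geodesic is $N$-Morse if every $(K,C)$-quasigeodesic with endpoints on it lies in its $N(K,C)$-neighborhood. $X^{(N)}_e$ is the set of $y\in X$ such that some geodesic $[e,y]$ is $N$-Morse; $\partial X^{(N)}_e$ is its sequential Gromov boundary, whose points are represented by $N$-Morse geodesic rays from $e$ (for proper $X$). A biinfinite geodesic $\gamma$, parametrized so $\gamma(0)$ is a closest point of $\gamma$ to $e$, is forward asymptotic to $\lambda\in\partial X^{(N)}_e$ if for any $N$-Morse geodesic ray $\gamma_\lambda$ from $e$ representing $\lambda$, $d_{Haus}(\gamma([0,\infty)),\gamma_\lambda([0,\infty)))<\infty$; backward asymptotic is defined with $\gamma((-\infty,0])$; $\gamma$ is bi-asymptotic to $(\lambda_-,\lambda_+)$ if it is backward asymptotic to $\lambda_-$ and forward asymptotic to $\lambda_+$ (the ordering convention is immaterial for the statement). *)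

theory Defs
  imports "HOL-Analysis.Analysis"
begin

text \<open>Metric spaces are given explicitly by a carrier X and a metric d, so that a
constant "depending only on N" can be quantified uniformly over all spaces.\<close>

definition proper_metric :: "'a set \<Rightarrow> ('a \<Rightarrow> 'a \<Rightarrow> real) \<Rightarrow> bool" where
  "proper_metric X d \<longleftrightarrow> Metric_space X d \<and>
     (\<forall>x\<in>X. \<forall>r\<ge>0. compactin (Metric_space.mtopology X d) (Metric_space.mcball X d x r))"

definition isometric_on :: "'a set \<Rightarrow> ('a \<Rightarrow> 'a \<Rightarrow> real) \<Rightarrow> real set \<Rightarrow> (real \<Rightarrow> 'a) \<Rightarrow> bool" where
  "isometric_on X d I g \<longleftrightarrow> (\<forall>s\<in>I. \<forall>t\<in>I. g s \<in> X \<and> d (g s) (g t) = \<bar>s - t\<bar>)"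

definition geodesic_space :: "'a set \<Rightarrow> ('a \<Rightarrow> 'a \<Rightarrow> real) \<Rightarrow> bool" where
  "geodesic_space X d \<longleftrightarrow> (\<forall>x\<in>X. \<forall>y\<in>X. \<exists>g. g 0 = x \<and> g (d x y) = y \<and> isometric_on X d {0..d x y} g)"

definition quasigeodesic :: "'a set \<Rightarrow> ('a \<Rightarrow> 'a \<Rightarrow> real) \<Rightarrow> real \<Rightarrow> real \<Rightarrow> real set \<Rightarrow> (real \<Rightarrow> 'a) \<Rightarrow> bool" where
  "quasigeodesic X d K C I q \<longleftrightarrow> (\<forall>s\<in>I. \<forall>t\<in>I. q s \<in> X \<and>
      \<bar>s - t\<bar> / K - C \<le> d (q s) (q t) \<and> d (q s) (q t) \<le> K * \<bar>s - t\<bar> + C)"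

definition morse_geodesic :: "'a set \<Rightarrow> ('a \<Rightarrow> 'a \<Rightarrow> real) \<Rightarrow> (real \<Rightarrow> real \<Rightarrow> real) \<Rightarrow> real set \<Rightarrow> (real \<Rightarrow> 'a) \<Rightarrow> bool" where
  "morse_geodesic X d N I g \<longleftrightarrow> isometric_on X d I g \<and>
     (\<forall>K C a b q. K \<ge> 1 \<longrightarrow> C \<ge> 0 \<longrightarrow> a \<le> b \<longrightarrow> quasigeodesic X d K C {a..b} q \<longrightarrow>
        q a \<in> g ` I \<longrightarrow> q b \<in> g ` I \<longrightarrow> (\<forall>t\<in>{a..b}. \<exists>s\<in>I. d (q t) (g s) \<le> N K C))"

definition morse_ray :: "'a set \<Rightarrow> ('a \<Rightarrow> 'a \<Rightarrow> real) \<Rightarrow> (real \<Rightarrow> real \<Rightarrow> real) \<Rightarrow> 'a \<Rightarrow> (real \<Rightarrow> 'a) \<Rightarrow> bool" where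
  "morse_ray X d N e g \<longleftrightarrow> g 0 = e \<and> morse_geodesic X d N {0..} g"

definition haus_le :: "('a \<Rightarrow> 'a \<Rightarrow> real) \<Rightarrow> 'a set \<Rightarrow> 'a set \<Rightarrow> real \<Rightarrow> bool" where
  "haus_le d A B D \<longleftrightarrow> (\<forall>a\<in>A. \<exists>b\<in>B. d a b \<le> D) \<and> (\<forall>b\<in>B. \<exists>a\<in>A. d a b \<le> D)"

definition haus_finite :: "('a \<Rightarrow> 'a \<Rightarrow> real) \<Rightarrow> 'a set \<Rightarrow> 'a set \<Rightarrow> bool" where
  "haus_finite d A B \<longleftrightarrow> (\<exists>D. haus_le d A B D)"

definition haus_less :: "('a \<Rightarrow> 'a \<Rightarrow> real) \<Rightarrow> 'a set \<Rightarrow> 'a set \<Rightarrow> real \<Rightarrow> bool" where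
  "haus_less d A B r \<longleftrightarrow> (\<exists>D<r. haus_le d A B D)"

text \<open>The N-Morse boundary based at e: N-Morse geodesic rays from e, modulo
finite Hausdorff distance; a point is the set of rays representing it.\<close>
definition morse_boundary :: "'a set \<Rightarrow> ('a \<Rightarrow> 'a \<Rightarrow> real) \<Rightarrow> (real \<Rightarrow> real \<Rightarrow> real) \<Rightarrow> 'a \<Rightarrow> (real \<Rightarrow> 'a) set set" where
  "morse_boundary X d N e =
     {{b. morse_ray X d N e b \<and> haus_finite d (b ` {0..}) (a ` {0..})} | a. morse_ray X d N e a}"

definition forward_asymptotic :: "('a \<Rightarrow> 'a \<Rightarrow> real) \<Rightarrow> (real \<Rightarrow> 'a) \<Rightarrow> (real \<Rightarrow> 'a) set \<Rightarrow> bool" where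
  "forward_asymptotic d g lam \<longleftrightarrow> (\<forall>b\<in>lam. haus_finite d (g ` {0..}) (b ` {0..}))"

definition backward_asymptotic :: "('a \<Rightarrow> 'a \<Rightarrow> real) \<Rightarrow> (real \<Rightarrow> 'a) \<Rightarrow> (real \<Rightarrow> 'a) set \<Rightarrow> bool" where
  "backward_asymptotic d g lam \<longleftrightarrow> (\<forall>b\<in>lam. haus_finite d (g ` {..0}) (b ` {0..}))"

definition bi_asymptotic :: "('a \<Rightarrow> 'a \<Rightarrow> real) \<Rightarrow> (real \<Rightarrow> 'a) \<Rightarrow> (real \<Rightarrow> 'a) set \<Rightarrow> (real \<Rightarrow> 'a) set \<Rightarrow> bool" where
  "bi_asymptotic d g lm lp \<longleftrightarrow> backward_asymptotic d g lm \<and> forward_asymptotic d g lp"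

end

theory Submission
  imports Defs
begin

definition cat3 :: "(real \<Rightarrow> 'a) \<Rightarrow> real \<Rightarrow> (real \<Rightarrow> 'a) \<Rightarrow> real \<Rightarrow> (real \<Rightarrow> 'a) \<Rightarrow> real \<Rightarrow> 'a" where
  "cat3 f0 l0 f1 l1 f2 t = (if t \<le> l0 then f0 t else if t \<le> l0 + l1 then f1 (t - l0) else f2 (t - l0 - l1))"

lemma iso_d: "isometric_on X d I g \<Longrightarrow> s \<in> I \<Longrightarrow> t \<in> I \<Longrightarrow> d (g s) (g t) = \<bar>s - t\<bar>"
  unfolding isometric_on_def by blast

lemma iso_in: "isometric_on X d I g \<Longrightarrow> s \<in> I \<Longrightarrow> g s \<in> X"
  unfolding isometric_on_def by blast

context Metric_space
begin

lemma quasi3: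
  assumes i0: "isometric_on M d {0..l0} f0" and i1: "isometric_on M d {0..l1} f1"
    and i2: "isometric_on M d {0..l2} f2"
    and j1: "f0 l0 = f1 0" and j2: "f1 l1 = f2 0"
    and l: "l0 \<ge> 0" "l1 \<ge> 0" "l2 \<ge> 0" and C: "C \<ge> 0"
    and H01: "\<forall>a\<in>{0..l0}. \<forall>\<tau>\<in>{0..l1}. ((l0 - a) + \<tau>)/3 - C \<le> d (f0 a) (f1 \<tau>)"
    and H12: "\<forall>\<tau>\<in>{0..l1}. \<forall>b\<in>{0..l2}. ((l1 - \<tau>) + b)/3 - C \<le> d (f1 \<tau>) (f2 b)"
    and H02: "\<forall>a\<in>{0..l0}. \<forall>b\<in>{0..l2}. ((l0 - a) + l1 + b)/3 - C \<le> d (f0 a) (f2 b)"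
  shows "quasigeodesic M d 3 C {0..l0+l1+l2} (cat3 f0 l0 f1 l1 f2)"
proof -
  let ?q = "cat3 f0 l0 f1 l1 f2"
  have P0: "?q t = f0 t" if "0 \<le> t" "t \<le> l0" for t using that by (simp add: cat3_def)
  have P1: "?q t = f1 (t - l0)" if "l0 \<le> t" "t \<le> l0 + l1" for t
    using that j1 by (auto simp: cat3_def)
  have P2: "?q t = f2 (t - l0 - l1)" if "l0 + l1 \<le> t" for t
    using that j1 j2 l by (auto simp: cat3_def)
  have inM: "?q t \<in> M" if "t \<in> {0..l0+l1+l2}" for t
  proof (cases "t \<le> l0")
    case True then show ?thesis using that P0 iso_in[OF i0] by auto
  next
    case False
    show ?thesis
    proof (cases "t \<le> l0 + l1")
      case True then show ?thesis using False that P1 iso_in[OF i1] by auto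
    next
      case F2: False then show ?thesis using that P2 iso_in[OF i2] by auto
    qed
  qed
  have f0M: "f0 a \<in> M" if "a \<in> {0..l0}" for a using iso_in[OF i0 that] .
  have f1M: "f1 a \<in> M" if "a \<in> {0..l1}" for a using iso_in[OF i1 that] .
  have f2M: "f2 a \<in> M" if "a \<in> {0..l2}" for a using iso_in[OF i2 that] .
  have key: "(t - s)/3 - C \<le> d (?q s) (?q t) \<and> d (?q s) (?q t) \<le> t - s"
    if st: "0 \<le> s" "s \<le> t" "t \<le> l0+l1+l2" for s t
  proof -
    consider "t \<le> l0" | "s \<le> l0" "l0 \<le> t" "t \<le> l0 + l1" | "s \<le> l0" "l0 + l1 \<le> t"
      | "l0 \<le> s" "t \<le> l0 + l1" | "l0 \<le> s" "s \<le> l0 + l1" "l0 + l1 \<le> t" | "l0 + l1 \<le> s"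
      by linarith
    then show ?thesis
    proof cases
      case 1
      then have "d (?q s) (?q t) = t - s" using st P0 iso_d[OF i0, of s t] by auto
      then show ?thesis using C st by (simp add: field_simps)
    next
      case 2
      have e: "?q s = f0 s" "?q t = f1 (t - l0)" using 2 st P0 P1 by auto
      have "d (f0 s) (f1 (t - l0)) \<le> d (f0 s) (f0 l0) + d (f1 0) (f1 (t - l0))"
        using triangle[of "f0 s" "f0 l0" "f1 (t - l0)"] j1 f0M f1M 2 st l by auto
      also have "\<dots> = t - s" using iso_d[OF i0, of s l0] iso_d[OF i1, of 0 "t - l0"] 2 st l by auto
      moreover have "((l0 - s) + (t - l0))/3 - C \<le> d (f0 s) (f1 (t - l0))"
        using H01[rule_format, of s "t - l0"] 2 st by auto
      ultimately show ?thesis using e by (simp add: field_simps)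
    next
      case 3
      have e: "?q s = f0 s" "?q t = f2 (t - l0 - l1)" using 3 st P0 P2 by auto
      have "d (f0 s) (f2 (t - l0 - l1)) \<le> d (f0 s) (f0 l0) + d (f0 l0) (f2 (t - l0 - l1))"
        using triangle[of "f0 s" "f0 l0" "f2 (t - l0 - l1)"] f0M f2M 3 st l by auto
      also have "d (f0 l0) (f2 (t - l0 - l1)) \<le> d (f1 0) (f1 l1) + d (f2 0) (f2 (t - l0 - l1))"
        using triangle[of "f1 0" "f1 l1" "f2 (t - l0 - l1)"] j1 j2 f1M f2M 3 st l by auto
      finally have "d (f0 s) (f2 (t - l0 - l1)) \<le> t - s"
        using iso_d[OF i0, of s l0] iso_d[OF i1, of 0 l1] iso_d[OF i2, of 0 "t - l0 - l1"] 3 st l by auto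
      moreover have "((l0 - s) + l1 + (t - l0 - l1))/3 - C \<le> d (f0 s) (f2 (t - l0 - l1))"
        using H02[rule_format, of s "t - l0 - l1"] 3 st by auto
      ultimately show ?thesis using e by (simp add: field_simps)
    next
      case 4
      then have "d (?q s) (?q t) = t - s" using st P1 iso_d[OF i1, of "s - l0" "t - l0"] by auto
      then show ?thesis using C st by (simp add: field_simps)
    next
      case 5
      have e: "?q s = f1 (s - l0)" "?q t = f2 (t - l0 - l1)" using 5 st P1 P2 by auto
      have "d (f1 (s - l0)) (f2 (t - l0 - l1)) \<le> d (f1 (s - l0)) (f1 l1) + d (f2 0) (f2 (t - l0 - l1))"
        using triangle[of "f1 (s - l0)" "f1 l1" "f2 (t - l0 - l1)"] j2 f1M f2M 5 st l by auto
      also have "\<dots> = t - s" using iso_d[OF i1, of "s - l0" l1] iso_d[OF i2, of 0 "t - l0 - l1"] 5 st l by auto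
      moreover have "((l1 - (s - l0)) + (t - l0 - l1))/3 - C \<le> d (f1 (s - l0)) (f2 (t - l0 - l1))"
        using H12[rule_format, of "s - l0" "t - l0 - l1"] 5 st by auto
      ultimately show ?thesis using e by (simp add: field_simps)
    next
      case 6
      then have "d (?q s) (?q t) = t - s" using st P2 iso_d[OF i2, of "s - l0 - l1" "t - l0 - l1"] l by auto
      then show ?thesis using C st by (simp add: field_simps)
    qed
  qed
  show ?thesis unfolding quasigeodesic_def
  proof (intro ballI conjI)
    fix s t assume s: "s \<in> {0..l0+l1+l2}" and t: "t \<in> {0..l0+l1+l2}"
    show "?q s \<in> M" using inM s .
    have "\<bar>s - t\<bar>/3 - C \<le> d (?q s) (?q t) \<and> d (?q s) (?q t) \<le> \<bar>s - t\<bar>"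
    proof (cases "s \<le> t")
      case True then show ?thesis using key[of s t] s t by auto
    next
      case False then show ?thesis using key[of t s] s t commute[of "?q s" "?q t"] by auto
    qed
    note hh = this
    show "\<bar>s - t\<bar> / 3 - C \<le> d (?q s) (?q t)" using conjunct1[OF hh] by linarith
    show "d (?q s) (?q t) \<le> 3 * \<bar>s - t\<bar> + C"
      using conjunct2[OF hh] C abs_ge_zero[of "s - t"] by (smt (verit))
  qed
qed

lemma cat3_start: "l0 \<ge> 0 \<Longrightarrow> cat3 f0 l0 f1 l1 f2 0 = f0 0"
  by (simp add: cat3_def)

lemma cat3_at0: "0 \<le> a \<Longrightarrow> a \<le> l0 \<Longrightarrow> cat3 f0 l0 f1 l1 f2 a = f0 a"
  by (simp add: cat3_def)

lemma cat3_at1: "f0 l0 = f1 0 \<Longrightarrow> 0 \<le> a \<Longrightarrow> a \<le> l1 \<Longrightarrow> cat3 f0 l0 f1 l1 f2 (l0 + a) = f1 a"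
  by (auto simp: cat3_def)

lemma cat3_at2: "f0 l0 = f1 0 \<Longrightarrow> f1 l1 = f2 0 \<Longrightarrow> l1 \<ge> 0 \<Longrightarrow> 0 \<le> a \<Longrightarrow> cat3 f0 l0 f1 l1 f2 (l0 + l1 + a) = f2 a"
  by (auto simp: cat3_def)

lemma geod:
  assumes "geodesic_space M d" "x \<in> M" "y \<in> M"
  shows "\<exists>g. g 0 = x \<and> g (d x y) = y \<and> isometric_on M d {0..d x y} g"
  using assms unfolding geodesic_space_def by blast

definition rdist :: "(real \<Rightarrow> 'a) \<Rightarrow> 'a \<Rightarrow> real" where
  "rdist b x = Inf ((\<lambda>u. d x (b u)) ` {0..})"

lemma rdist_le: "u \<ge> 0 \<Longrightarrow> rdist b x \<le> d x (b u)"
  unfolding rdist_def by (rule cInf_lower) (auto intro: bdd_belowI[where m=0])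

lemma rdist_nonneg: "0 \<le> rdist b x"
  unfolding rdist_def by (rule cInf_greatest) auto

lemma rdist_approx: "\<epsilon> > 0 \<Longrightarrow> \<exists>u\<ge>0. d x (b u) < rdist b x + \<epsilon>"
proof (rule ccontr)
  assume e: "\<epsilon> > 0" and "\<not> (\<exists>u\<ge>0. d x (b u) < rdist b x + \<epsilon>)"
  then have "\<forall>u\<ge>0. rdist b x + \<epsilon> \<le> d x (b u)" by auto
  then have "rdist b x + \<epsilon> \<le> rdist b x" unfolding rdist_def
    by (intro cInf_greatest) auto
  then show False using e by simp
qed

lemma rdist_lip:
  assumes "w \<in> M" "z \<in> M" "\<forall>u\<ge>0. b u \<in> M"
  shows "rdist b w \<le> d w z + rdist b z"
proof -
  have "rdist b w - d w z \<le> rdist b z" unfolding rdist_def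
  proof (rule cInf_greatest)
    show "(\<lambda>u. d z (b u)) ` {0..} \<noteq> {}" by auto
    fix y assume "y \<in> (\<lambda>u. d z (b u)) ` {0..}"
    then obtain u where u: "u \<ge> 0" "y = d z (b u)" by auto
    have "Inf ((\<lambda>u. d w (b u)) ` {0..}) \<le> d w (b u)"
      using rdist_le[OF u(1), of b w] unfolding rdist_def .
    also have "\<dots> \<le> d w z + d z (b u)" using triangle assms u by auto
    finally show "Inf ((\<lambda>u. d w (b u)) ` {0..}) - d w z \<le> y" using u by simp
  qed
  then show ?thesis by simp
qed

lemma morse_conc:
  assumes "morse_geodesic M d N I g" "K \<ge> 1" "C \<ge> 0" "a \<le> b" "quasigeodesic M d K C {a..b} q"
    "q a \<in> g ` I" "q b \<in> g ` I" "t \<in> {a..b}"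
  shows "\<exists>s\<in>I. d (q t) (g s) \<le> N K C"
proof -
  have "\<forall>K C a b q. K \<ge> 1 \<longrightarrow> C \<ge> 0 \<longrightarrow> a \<le> b \<longrightarrow> quasigeodesic M d K C {a..b} q \<longrightarrow>
        q a \<in> g ` I \<longrightarrow> q b \<in> g ` I \<longrightarrow> (\<forall>t\<in>{a..b}. \<exists>s\<in>I. d (q t) (g s) \<le> N K C)"
    using assms(1) unfolding morse_geodesic_def by (rule conjunct2)
  from this[rule_format, OF assms(2) assms(3) assms(4) assms(5) assms(6) assms(7)] assms(8)
  show ?thesis by blast
qed

lemma liminf_close:
  assumes mr: "morse_geodesic M d N {0..} \<beta>" and gi: "isometric_on M d UNIV \<gamma>"
    and geo: "geodesic_space M d"
    and HB: "\<forall>s\<ge>0. \<exists>u\<ge>0. d (\<gamma> s) (\<beta> u) \<le> D"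
  shows "\<exists>s\<ge>T. \<exists>u\<ge>0. d (\<gamma> s) (\<beta> u) \<le> N 3 1"
proof -
  have bi: "isometric_on M d {0..} \<beta>" using mr unfolding morse_geodesic_def by (rule conjunct1)
  have bM: "\<forall>u\<ge>0. \<beta> u \<in> M" using iso_in[OF bi] by auto
  have gM: "\<gamma> s \<in> M" for s using iso_in[OF gi] by auto
  have gd: "d (\<gamma> s) (\<gamma> t) = \<bar>s - t\<bar>" for s t using iso_d[OF gi] by auto
  define h where "h s = rdist \<beta> (\<gamma> s)" for s
  have hD: "h s \<le> D" if s0: "s \<ge> 0" for s
  proof -
    obtain u where u: "u \<ge> 0" "d (\<gamma> s) (\<beta> u) \<le> D" using HB s0 by auto
    have "rdist \<beta> (\<gamma> s) \<le> d (\<gamma> s) (\<beta> u)" by (rule rdist_le[OF u(1)])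
    then show ?thesis unfolding h_def using u(2) by linarith
  qed
  have h0: "h s \<ge> 0" for s unfolding h_def by (rule rdist_nonneg)
  define m where "m T = Inf (h ` {T..})" for T
  have bdh: "bdd_below (h ` {T..})" for T
    by (rule bdd_belowI[where m=0]) (use h0 in blast)
  have m_le: "m T \<le> h s" if "s \<ge> T" for T s
  proof -
    have "h s \<in> h ` {T..}" using that by simp
    then show ?thesis unfolding m_def by (rule cInf_lower[OF _ bdh])
  qed
  have m0: "m T \<ge> 0" for T
  proof -
    have "h ` {T..} \<noteq> {}" by simp
    then show ?thesis unfolding m_def using h0 by (metis cInf_greatest imageE)
  qed
  have mD: "m T \<le> D" if "T \<ge> 0" for T using m_le[of T T] hD[OF that] by simp
  define H where "H = Sup (m ` {0..})"
  have bdm: "bdd_above (m ` {0..})" by (rule bdd_aboveI[where M=D]) (auto simp: mD)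
  have mH: "m T \<le> H" if "T \<ge> 0" for T unfolding H_def by (rule cSup_upper) (use that bdm in auto)
  have H0: "H \<ge> 0" using mH[of 0] m0[of 0] by simp
  define \<epsilon> :: real where "\<epsilon> = 1/3"
  obtain T0 where T0: "T0 \<ge> 0" "m T0 > H - \<epsilon>"
  proof (rule ccontr)
    assume "\<not> thesis"
    have "\<forall>T\<ge>0. m T \<le> H - \<epsilon>"
    proof (intro allI impI)
      fix T :: real assume T: "T \<ge> 0"
      show "m T \<le> H - \<epsilon>"
      proof (rule ccontr)
        assume "\<not> m T \<le> H - \<epsilon>"
        then have "m T > H - \<epsilon>" by simp
        from that[OF T this] \<open>\<not> thesis\<close> show False by blast
      qed
    qed
    then have "H \<le> H - \<epsilon>" unfolding H_def by (intro cSup_least) auto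
    then show False by (simp add: \<epsilon>_def)
  qed
  have lowb: "h s > H - \<epsilon>" if "s \<ge> T0" for s using m_le[OF that] T0 by simp
  have upb: "\<exists>s\<ge>T'. h s < H + \<epsilon>" if "T' \<ge> 0" for T'
  proof (rule ccontr)
    assume "\<not> ?thesis"
    then have "\<forall>s\<ge>T'. H + \<epsilon> \<le> h s" by (meson not_less)
    then have "H + \<epsilon> \<le> m T'" unfolding m_def by (intro cInf_greatest) auto
    then show False using mH[OF that] by (simp add: \<epsilon>_def)
  qed
  obtain s1 where s1: "s1 \<ge> max (max T T0) 0" "h s1 < H + \<epsilon>" using upb[of "max (max T T0) 0"] by auto
  obtain u1 where u1: "u1 \<ge> 0" "d (\<gamma> s1) (\<beta> u1) < h s1 + \<epsilon>"
    using rdist_approx[of \<epsilon> "\<gamma> s1" \<beta>] unfolding h_def \<epsilon>_def by auto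
  obtain s2 where s2: "s2 \<ge> s1 + 4 * H + 4" "h s2 < H + \<epsilon>" using upb[of "s1 + 4 * H + 4"] s1 H0 by auto
  obtain u2 where u2: "u2 \<ge> 0" "d (\<gamma> s2) (\<beta> u2) < h s2 + \<epsilon>"
    using rdist_approx[of \<epsilon> "\<gamma> s2" \<beta>] unfolding h_def \<epsilon>_def by auto
  define l0 where "l0 = d (\<beta> u1) (\<gamma> s1)"
  define l2 where "l2 = d (\<gamma> s2) (\<beta> u2)"
  define l1 where "l1 = s2 - s1"
  obtain f0 where f0: "f0 0 = \<beta> u1" "f0 l0 = \<gamma> s1" "isometric_on M d {0..l0} f0"
    using geod[OF geo bM[rule_format, OF u1(1)] gM] unfolding l0_def by blast
  obtain f2 where f2: "f2 0 = \<gamma> s2" "f2 l2 = \<beta> u2" "isometric_on M d {0..l2} f2"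
    using geod[OF geo gM bM[rule_format, OF u2(1)]] unfolding l2_def by blast
  define f1 where "f1 \<tau> = \<gamma> (s1 + \<tau>)" for \<tau>
  have l0b: "l0 < H + 1" using u1 s1 commute[of "\<beta> u1" "\<gamma> s1"] unfolding l0_def \<epsilon>_def by simp
  have l2b: "l2 < H + 1" using u2 s2 unfolding l2_def \<epsilon>_def by simp
  have l1b: "l1 \<ge> 4 * H + 4" using s2 unfolding l1_def by simp
  have l0n: "l0 \<ge> 0" "l2 \<ge> 0" unfolding l0_def l2_def by auto
  have f1i: "isometric_on M d {0..l1} f1" unfolding isometric_on_def f1_def using gM gd by auto
  have f0M: "f0 a \<in> M" if "a \<in> {0..l0}" for a using iso_in[OF f0(3) that] .
  have f2M: "f2 a \<in> M" if "a \<in> {0..l2}" for a using iso_in[OF f2(3) that] .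
  have f0x: "d (f0 a) (\<gamma> s1) = l0 - a" if "a \<in> {0..l0}" for a
    using iso_d[OF f0(3) that, of l0] f0(2) that l0n by auto
  have f0r: "rdist \<beta> (f0 a) \<le> a" if "a \<in> {0..l0}" for a
    using rdist_le[OF u1(1), of \<beta> "f0 a"] iso_d[OF f0(3) that, of 0] f0(1) that l0n by auto
  have f2x: "d (\<gamma> s2) (f2 b) = b" if "b \<in> {0..l2}" for b
    using iso_d[OF f2(3), of 0 b] f2(1) that l0n by auto
  have f2r: "rdist \<beta> (f2 b) \<le> l2 - b" if "b \<in> {0..l2}" for b
    using rdist_le[OF u2(1), of \<beta> "f2 b"] iso_d[OF f2(3) that, of l2] f2(2) that l0n by auto
  have q: "quasigeodesic M d 3 1 {0..l0+l1+l2} (cat3 f0 l0 f1 l1 f2)"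
  proof (rule quasi3[OF f0(3) f1i f2(3)])
    show "f0 l0 = f1 0" using f0(2) by (simp add: f1_def)
    show "f1 l1 = f2 0" using f2(1) by (simp add: f1_def l1_def)
    show "0 \<le> l0" "0 \<le> l1" "0 \<le> l2" "(0::real) \<le> 1" using l0n l1b H0 by auto
    show "\<forall>a\<in>{0..l0}. \<forall>\<tau>\<in>{0..l1}. ((l0 - a) + \<tau>)/3 - 1 \<le> d (f0 a) (f1 \<tau>)"
    proof (intro ballI)
      fix a \<tau> assume a: "a \<in> {0..l0}" and t: "\<tau> \<in> {0..l1}"
      have "d (\<gamma> s1) (f1 \<tau>) \<le> d (\<gamma> s1) (f0 a) + d (f0 a) (f1 \<tau>)"
        using triangle[of "\<gamma> s1" "f0 a" "\<gamma> (s1 + \<tau>)"] f0M[OF a] gM unfolding f1_def by blast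
      then have d1: "\<tau> - (l0 - a) \<le> d (f0 a) (f1 \<tau>)"
        using gd[of s1 "s1 + \<tau>"] f0x[OF a] commute[of "f0 a" "\<gamma> s1"] t by (simp add: f1_def)
      have "h (s1 + \<tau>) \<le> d (f1 \<tau>) (f0 a) + rdist \<beta> (f0 a)"
        unfolding h_def f1_def using rdist_lip gM f0M[OF a] bM by blast
      moreover have "h (s1 + \<tau>) > H - \<epsilon>" using lowb s1 t by auto
      ultimately have d2: "H - \<epsilon> - a < d (f0 a) (f1 \<tau>)" using f0r[OF a] commute[of "f0 a" "f1 \<tau>"] by linarith
      have "l0 < H + 2 * \<epsilon>" using u1 s1 commute[of "\<beta> u1" "\<gamma> s1"] unfolding l0_def by simp
      then show "((l0 - a) + \<tau>)/3 - 1 \<le> d (f0 a) (f1 \<tau>)" using d1 d2 unfolding \<epsilon>_def by (simp add: field_simps)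
    qed
    show "\<forall>\<tau>\<in>{0..l1}. \<forall>b\<in>{0..l2}. ((l1 - \<tau>) + b)/3 - 1 \<le> d (f1 \<tau>) (f2 b)"
    proof (intro ballI)
      fix b \<tau> assume b: "b \<in> {0..l2}" and t: "\<tau> \<in> {0..l1}"
      have "d (f1 \<tau>) (\<gamma> s2) \<le> d (f1 \<tau>) (f2 b) + d (f2 b) (\<gamma> s2)"
        using triangle[of "\<gamma> (s1 + \<tau>)" "f2 b" "\<gamma> s2"] f2M[OF b] gM unfolding f1_def by blast
      then have d1: "(l1 - \<tau>) - b \<le> d (f1 \<tau>) (f2 b)"
        using gd[of "s1 + \<tau>" s2] f2x[OF b] commute[of "f2 b" "\<gamma> s2"] t by (simp add: f1_def l1_def)
      have "h (s1 + \<tau>) \<le> d (f1 \<tau>) (f2 b) + rdist \<beta> (f2 b)"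
        unfolding h_def f1_def using rdist_lip gM f2M[OF b] bM by blast
      moreover have "h (s1 + \<tau>) > H - \<epsilon>" using lowb s1 t by auto
      ultimately have d2: "H - \<epsilon> - (l2 - b) < d (f1 \<tau>) (f2 b)" using f2r[OF b] by linarith
      have "l2 < H + 2 * \<epsilon>" using u2 s2 unfolding l2_def by simp
      then show "((l1 - \<tau>) + b)/3 - 1 \<le> d (f1 \<tau>) (f2 b)" using d1 d2 unfolding \<epsilon>_def by (simp add: field_simps)
    qed
    show "\<forall>a\<in>{0..l0}. \<forall>b\<in>{0..l2}. ((l0 - a) + l1 + b)/3 - 1 \<le> d (f0 a) (f2 b)"
    proof (intro ballI)
      fix a b assume a: "a \<in> {0..l0}" and b: "b \<in> {0..l2}"
      have "d (\<gamma> s1) (\<gamma> s2) \<le> d (\<gamma> s1) (f0 a) + d (f0 a) (\<gamma> s2)"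
        using triangle[of "\<gamma> s1" "f0 a" "\<gamma> s2"] f0M[OF a] gM by blast
      moreover have "d (f0 a) (\<gamma> s2) \<le> d (f0 a) (f2 b) + d (f2 b) (\<gamma> s2)"
        using triangle[of "f0 a" "f2 b" "\<gamma> s2"] f0M[OF a] f2M[OF b] gM by blast
      ultimately have d1: "l1 - (l0 - a) - b \<le> d (f0 a) (f2 b)"
        using gd[of s1 s2] f0x[OF a] f2x[OF b] commute[of "f0 a" "\<gamma> s1"] commute[of "f2 b" "\<gamma> s2"] s2 H0
        by (simp add: l1_def)
      show "((l0 - a) + l1 + b)/3 - 1 \<le> d (f0 a) (f2 b)" using d1 a b l0b l2b l1b H0 by (auto simp: field_simps)
    qed
  qed
  have "\<exists>v\<in>{0..}. d (cat3 f0 l0 f1 l1 f2 l0) (\<beta> v) \<le> N 3 1"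
  proof (rule morse_conc[OF mr _ _ _ q])
    have "cat3 f0 l0 f1 l1 f2 0 = \<beta> u1" using cat3_start[OF l0n(1), of f0 f1 l1 f2] f0(1) by simp
    then show "cat3 f0 l0 f1 l1 f2 0 \<in> \<beta> ` {0..}" using u1(1) by auto
    have "cat3 f0 l0 f1 l1 f2 (l0 + l1 + l2) = f2 l2"
      by (rule cat3_at2) (use f0 f2 l1b H0 l0n in \<open>auto simp: f1_def l1_def\<close>)
    then show "cat3 f0 l0 f1 l1 f2 (l0 + l1 + l2) \<in> \<beta> ` {0..}" using f2(2) u2 by auto
    show "l0 \<in> {0..l0 + l1 + l2}" using l0n l1b H0 by auto
  qed (use l0n l1b H0 in auto)
  then show ?thesis using cat3_at0[of l0 l0 f0 f1 l1 f2] l0n f0(2) s1 by auto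
qed

lemma coverage:
  fixes Q :: "real \<Rightarrow> 'a" and L u v c Mq :: real
  assumes bi: "isometric_on M d {0..} \<beta>"
    and cov: "\<forall>\<tau>\<in>{0..L}. \<exists>w\<ge>0. d (Q \<tau>) (\<beta> w) \<le> c"
    and lip: "\<forall>\<tau>\<in>{0..L}. \<forall>\<tau>'\<in>{0..L}. \<bar>\<tau> - \<tau>'\<bar> \<le> 1 \<longrightarrow> d (Q \<tau>) (Q \<tau>') \<le> Mq"
    and QM: "\<forall>\<tau>\<in>{0..L}. Q \<tau> \<in> M"
    and Q0: "Q 0 = \<beta> 0" and QL: "Q L = \<beta> u" and u: "u \<ge> 0" and L: "L \<ge> 0"
    and v: "v \<ge> 0" "v \<le> u"
  shows "\<exists>\<tau>\<in>{0..L}. d (\<beta> v) (Q \<tau>) \<le> 3 * c + Mq"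
proof (rule ccontr)
  assume "\<not> ?thesis"
  then have far: "\<forall>\<tau>\<in>{0..L}. 3 * c + Mq < d (\<beta> v) (Q \<tau>)" by (meson not_le)
  have z0: "(0::real) \<in> {0..L}" using L by simp
  have bM: "\<beta> w \<in> M" if "w \<ge> 0" for w using iso_in[OF bi] that by auto
  have bd: "d (\<beta> w) (\<beta> w') = \<bar>w - w'\<bar>" if "w \<ge> 0" "w' \<ge> 0" for w w' using iso_d[OF bi] that by auto
  have c0: "c \<ge> 0"
  proof -
    obtain w where "w \<ge> 0" "d (Q 0) (\<beta> w) \<le> c" using cov[rule_format, OF z0] by auto
    then show ?thesis using nonneg[of "Q 0" "\<beta> w"] by linarith
  qed
  have M0: "Mq \<ge> 0" using lip[rule_format, OF z0 z0] nonneg[of "Q 0" "Q 0"] by linarith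
  define tk where "tk k = min (real k) L" for k :: nat
  have tkin: "tk k \<in> {0..L}" for k using L by (auto simp: tk_def)
  have tkstep: "\<bar>tk (Suc k) - tk k\<bar> \<le> 1" for k by (auto simp: tk_def)
  have claim: "\<forall>w\<ge>0. d (Q (tk k)) (\<beta> w) \<le> c \<longrightarrow> w < v" for k
  proof (induction k)
    case 0
    have t0: "tk 0 = 0" using L by (simp add: tk_def)
    show ?case
    proof (intro allI impI)
      fix w :: real assume w: "w \<ge> 0" and dw: "d (Q (tk 0)) (\<beta> w) \<le> c"
      have "w \<le> c" using dw t0 Q0 bd[of 0 w] w by simp
      show "w < v"
      proof (rule ccontr)
        assume "\<not> w < v"
        then have "d (\<beta> v) (Q 0) \<le> 3 * c + Mq" using bd[of v 0] v Q0 \<open>w \<le> c\<close> c0 M0 by simp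
        then show False using far[rule_format, OF z0] by simp
      qed
    qed
  next
    case (Suc k)
    show ?case
    proof (intro allI impI)
      fix w :: real assume w: "w \<ge> 0" and dw: "d (Q (tk (Suc k))) (\<beta> w) \<le> c"
      obtain w' where w': "w' \<ge> 0" "d (Q (tk k)) (\<beta> w') \<le> c" using cov[rule_format, OF tkin[of k]] by blast
      have w'v: "w' < v" using Suc.IH w' by blast
      show "w < v"
      proof (rule ccontr)
        assume "\<not> w < v"
        have "d (\<beta> w) (\<beta> w') \<le> d (\<beta> w) (Q (tk (Suc k))) + d (Q (tk (Suc k))) (\<beta> w')"
          using triangle[of "\<beta> w" "Q (tk (Suc k))" "\<beta> w'"] bM[OF w] bM[OF w'(1)] QM tkin by blast
        also have "d (Q (tk (Suc k))) (\<beta> w') \<le> d (Q (tk (Suc k))) (Q (tk k)) + d (Q (tk k)) (\<beta> w')"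
          using triangle[of "Q (tk (Suc k))" "Q (tk k)" "\<beta> w'"] bM[OF w'(1)] QM tkin by blast
        finally have "w - w' \<le> 2 * c + Mq"
          using bd[of w w'] w w' dw commute[of "\<beta> w" "Q (tk (Suc k))"]
            lip[rule_format, OF tkin[of "Suc k"] tkin[of k] tkstep[of k]]
          by (smt (verit))
        have "d (\<beta> v) (Q (tk (Suc k))) \<le> d (\<beta> v) (\<beta> w) + d (\<beta> w) (Q (tk (Suc k)))"
          using triangle[of "\<beta> v" "\<beta> w" "Q (tk (Suc k))"] bM[OF w] bM[OF v(1)] QM tkin by blast
        then have "d (\<beta> v) (Q (tk (Suc k))) \<le> 3 * c + Mq"
          using bd[of v w] w v \<open>\<not> w < v\<close> \<open>w - w' \<le> 2 * c + Mq\<close> w'v dw commute[of "\<beta> w" "Q (tk (Suc k))"]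
          by simp
        then show False using far[rule_format, OF tkin[of "Suc k"]] by simp
      qed
    qed
  qed
  define n where "n = nat \<lceil>L\<rceil>"
  have h1: "L \<le> of_int \<lceil>L\<rceil>" by (rule le_of_int_ceiling)
  have h2: "\<lceil>L\<rceil> \<ge> 0" using L by simp
  have "real n = of_int \<lceil>L\<rceil>" unfolding n_def using h2 by simp
  then have "tk n = L" unfolding tk_def using h1 by simp
  then have "u < v" using claim[of n] QL u bM[OF u] c0 by simp
  then show False using v by simp
qed

lemma Qpath:
  fixes \<gamma> g \<beta> :: "real \<Rightarrow> 'a" and r s u c0 :: real
  assumes bi: "isometric_on M d {0..} \<beta>" and gi: "isometric_on M d UNIV \<gamma>"
    and geo: "geodesic_space M d"
    and cl: "\<forall>t. d e (\<gamma> 0) \<le> d e (\<gamma> t)" and eM: "e \<in> M"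
    and g: "isometric_on M d {0..r} g" "g 0 = e" "g r = \<gamma> 0" and r: "r = d e (\<gamma> 0)"
    and s: "s \<ge> 0" and u: "u \<ge> 0" and du: "d (\<gamma> s) (\<beta> u) \<le> c0"
  obtains Q L where "quasigeodesic M d 3 (2 * c0) {0..L} Q" "Q 0 = e" "Q L = \<beta> u"
    "r + s \<le> L" "\<forall>a\<in>{0..r}. Q a = g a" "\<forall>t\<in>{0..s}. Q (r + t) = \<gamma> t"
    "\<forall>\<tau>\<in>{0..L}. (\<exists>a\<in>{0..r}. Q \<tau> = g a) \<or> (\<exists>t\<in>{0..s}. Q \<tau> = \<gamma> t) \<or> d (Q \<tau>) (\<gamma> s) \<le> c0"
proof -
  have gM: "\<gamma> t \<in> M" for t using iso_in[OF gi] by auto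
  have gd: "d (\<gamma> s) (\<gamma> t) = \<bar>s - t\<bar>" for s t using iso_d[OF gi] by auto
  have bM: "\<beta> u \<in> M" using iso_in[OF bi] u by auto
  have r0: "r \<ge> 0" using r by simp
  define l where "l = d (\<gamma> s) (\<beta> u)"
  have l0: "l \<ge> 0" unfolding l_def by simp
  have c0: "c0 \<ge> 0" using du nonneg[of "\<gamma> s" "\<beta> u"] by linarith
  obtain f2 where f2: "f2 0 = \<gamma> s" "f2 l = \<beta> u" "isometric_on M d {0..l} f2"
    using geod[OF geo gM bM] unfolding l_def by blast
  have f2M: "f2 b \<in> M" if "b \<in> {0..l}" for b using iso_in[OF f2(3) that] .
  have f2x: "d (\<gamma> s) (f2 b) = b" if "b \<in> {0..l}" for b
    using iso_d[OF f2(3), of 0 b] f2(1) that l0 by auto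
  have gaM: "g a \<in> M" if "a \<in> {0..r}" for a using iso_in[OF g(1) that] .
  have gae: "d e (g a) = a" if "a \<in> {0..r}" for a
    using iso_d[OF g(1), of 0 a] g(2) that r0 by auto
  have gap: "d (g a) (\<gamma> 0) = r - a" if "a \<in> {0..r}" for a
    using iso_d[OF g(1) that, of r] g(3) that r0 by auto
  have H01': "((r - a) + \<tau>)/3 \<le> d (g a) (\<gamma> \<tau>)" if a: "a \<in> {0..r}" and t: "\<tau> \<ge> 0" for a \<tau>
  proof -
    have "d e (\<gamma> \<tau>) \<le> d e (g a) + d (g a) (\<gamma> \<tau>)"
      using triangle[of e "g a" "\<gamma> \<tau>"] eM gaM[OF a] gM by blast
    then have d1: "r - a \<le> d (g a) (\<gamma> \<tau>)" using cl gae[OF a] r by smt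
    have "d (\<gamma> 0) (\<gamma> \<tau>) \<le> d (\<gamma> 0) (g a) + d (g a) (\<gamma> \<tau>)"
      using triangle[of "\<gamma> 0" "g a" "\<gamma> \<tau>"] gaM[OF a] gM by blast
    then have d2: "\<tau> - (r - a) \<le> d (g a) (\<gamma> \<tau>)"
      using gd[of 0 \<tau>] t gap[OF a] commute[of "g a" "\<gamma> 0"] by simp
    show ?thesis using d1 d2 by (simp add: field_simps)
  qed
  define Q where "Q = cat3 g r (\<lambda>t. \<gamma> t) s f2"
  have f1i: "isometric_on M d {0..s} (\<lambda>t. \<gamma> t)" unfolding isometric_on_def using gM gd by auto
  have q: "quasigeodesic M d 3 (2 * c0) {0..r+s+l} Q"
    unfolding Q_def
  proof (rule quasi3[OF g(1) f1i f2(3)])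
    show "g r = \<gamma> 0" by (rule g(3))
    show "\<gamma> s = f2 0" using f2(1) by simp
    show "0 \<le> r" "0 \<le> s" "0 \<le> l" "0 \<le> 2 * c0" using r0 s l0 c0 by auto
    show "\<forall>a\<in>{0..r}. \<forall>\<tau>\<in>{0..s}. ((r - a) + \<tau>)/3 - 2 * c0 \<le> d (g a) (\<gamma> \<tau>)"
    proof (intro ballI)
      fix a \<tau> assume a: "a \<in> {0..r}" and t: "\<tau> \<in> {0..s}"
      have "\<tau> \<ge> 0" using t by simp
      from H01'[OF a this] c0 show "((r - a) + \<tau>)/3 - 2 * c0 \<le> d (g a) (\<gamma> \<tau>)" by linarith
    qed
    show "\<forall>\<tau>\<in>{0..s}. \<forall>b\<in>{0..l}. ((s - \<tau>) + b)/3 - 2 * c0 \<le> d (\<gamma> \<tau>) (f2 b)"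
    proof (intro ballI)
      fix \<tau> b assume t: "\<tau> \<in> {0..s}" and b: "b \<in> {0..l}"
      have "d (\<gamma> \<tau>) (\<gamma> s) \<le> d (\<gamma> \<tau>) (f2 b) + d (f2 b) (\<gamma> s)"
        using triangle[of "\<gamma> \<tau>" "f2 b" "\<gamma> s"] f2M[OF b] gM by blast
      then have "(s - \<tau>) - b \<le> d (\<gamma> \<tau>) (f2 b)"
        using gd[of \<tau> s] t f2x[OF b] commute[of "f2 b" "\<gamma> s"] by simp
      moreover have "b \<le> c0" using b du unfolding l_def by simp
      ultimately show "((s - \<tau>) + b)/3 - 2 * c0 \<le> d (\<gamma> \<tau>) (f2 b)" using t b by (simp add: field_simps)
    qed
    show "\<forall>a\<in>{0..r}. \<forall>b\<in>{0..l}. ((r - a) + s + b)/3 - 2 * c0 \<le> d (g a) (f2 b)"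
    proof (intro ballI)
      fix a b assume a: "a \<in> {0..r}" and b: "b \<in> {0..l}"
      have "d (g a) (\<gamma> s) \<le> d (g a) (f2 b) + d (f2 b) (\<gamma> s)"
        using triangle[of "g a" "f2 b" "\<gamma> s"] f2M[OF b] gaM[OF a] gM by blast
      then have "((r - a) + s)/3 - b \<le> d (g a) (f2 b)"
        using H01'[OF a s] f2x[OF b] commute[of "f2 b" "\<gamma> s"] by (simp add: field_simps)
      moreover have "b \<le> c0" "b \<ge> 0" using b du unfolding l_def by auto
      ultimately show "((r - a) + s + b)/3 - 2 * c0 \<le> d (g a) (f2 b)" by (simp add: field_simps)
    qed
  qed
  show ?thesis
  proof (rule that[OF q])
    show "Q 0 = e" unfolding Q_def using cat3_start[OF r0, of g \<gamma> s f2] g(2) by simp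
    show "Q (r + s + l) = \<beta> u" unfolding Q_def using cat3_at2[of g r \<gamma> s f2 l] g(3) f2 s l0 by simp
    show "r + s \<le> r + s + l" using l0 by simp
    show "\<forall>a\<in>{0..r}. Q a = g a" unfolding Q_def using cat3_at0 by auto
    show "\<forall>t\<in>{0..s}. Q (r + t) = \<gamma> t" unfolding Q_def using cat3_at1[of g r \<gamma>] g(3) by auto
    show "\<forall>\<tau>\<in>{0..r+s+l}. (\<exists>a\<in>{0..r}. Q \<tau> = g a) \<or> (\<exists>t\<in>{0..s}. Q \<tau> = \<gamma> t) \<or> d (Q \<tau>) (\<gamma> s) \<le> c0"
    proof
      fix \<tau> assume t: "\<tau> \<in> {0..r+s+l}"
      consider "\<tau> \<le> r" | "r \<le> \<tau>" "\<tau> \<le> r + s" | "r + s \<le> \<tau>" by linarith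
      then show "(\<exists>a\<in>{0..r}. Q \<tau> = g a) \<or> (\<exists>t\<in>{0..s}. Q \<tau> = \<gamma> t) \<or> d (Q \<tau>) (\<gamma> s) \<le> c0"
      proof cases
        case 1
        then have "Q \<tau> = g \<tau>" unfolding Q_def using cat3_at0 t by auto
        then show ?thesis using 1 t by auto
      next
        case 2
        then have "Q \<tau> = \<gamma> (\<tau> - r)" unfolding Q_def using cat3_at1[of g r \<gamma> "\<tau> - r" s f2] g(3) by auto
        then show ?thesis using 2 by auto
      next
        case 3
        then have e3: "Q \<tau> = f2 (\<tau> - r - s)" unfolding Q_def
          using cat3_at2[of g r \<gamma> s f2 "\<tau> - r - s"] g(3) f2 s by auto
        have "\<tau> - r - s \<in> {0..l}" using 3 t by auto
        then have "d (Q \<tau>) (\<gamma> s) \<le> c0" using e3 f2x commute[of "f2 (\<tau> - r - s)" "\<gamma> s"] du unfolding l_def by auto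
        then show ?thesis by simp
      qed
    qed
  qed
qed

lemma quasi_up:
  assumes "quasigeodesic M d K C I q" "s \<in> I" "t \<in> I"
  shows "q s \<in> M" "d (q s) (q t) \<le> K * \<bar>s - t\<bar> + C"
proof -
  have "\<forall>s\<in>I. \<forall>t\<in>I. q s \<in> M \<and> \<bar>s - t\<bar> / K - C \<le> d (q s) (q t) \<and> d (q s) (q t) \<le> K * \<bar>s - t\<bar> + C"
    using assms(1) unfolding quasigeodesic_def .
  then have "q s \<in> M \<and> \<bar>s - t\<bar> / K - C \<le> d (q s) (q t) \<and> d (q s) (q t) \<le> K * \<bar>s - t\<bar> + C"
    using assms(2,3) by blast
  then show "q s \<in> M" "d (q s) (q t) \<le> K * \<bar>s - t\<bar> + C" by auto
qed

lemma forward_facts: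
  fixes \<gamma> g \<beta> :: "real \<Rightarrow> 'a" and r D :: real and N :: "real \<Rightarrow> real \<Rightarrow> real"
  assumes mr: "morse_geodesic M d N {0..} \<beta>" and b0: "\<beta> 0 = e"
    and gi: "isometric_on M d UNIV \<gamma>"
    and geo: "geodesic_space M d"
    and cl: "\<forall>t. d e (\<gamma> 0) \<le> d e (\<gamma> t)" and eM: "e \<in> M"
    and g: "isometric_on M d {0..r} g" "g 0 = e" "g r = \<gamma> 0" and r: "r = d e (\<gamma> 0)"
    and HB: "\<forall>s\<ge>0. \<exists>u\<ge>0. d (\<gamma> s) (\<beta> u) \<le> D"
    and Np: "\<forall>K\<ge>1. \<forall>C\<ge>0. N K C \<ge> 0"
  shows "(\<forall>t\<ge>0. \<exists>u\<ge>0. d (\<gamma> t) (\<beta> u) \<le> N 3 (2 * N 3 1))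
    \<and> (\<forall>a\<in>{0..r}. \<exists>u\<ge>0. d (g a) (\<beta> u) \<le> N 3 (2 * N 3 1))
    \<and> (\<forall>v\<ge>0. (\<exists>a\<in>{0..r}. d (\<beta> v) (g a) \<le> 3 * N 3 (2 * N 3 1) + 3 + 3 * N 3 1)
         \<or> (\<exists>t\<ge>0. d (\<beta> v) (\<gamma> t) \<le> 3 * N 3 (2 * N 3 1) + 3 + 3 * N 3 1))"
proof -
  define c0 where "c0 = N 3 1"
  define c1 where "c1 = N 3 (2 * c0)"
  have c0p: "c0 \<ge> 0" unfolding c0_def using Np by simp
  have c1p: "c1 \<ge> 0" unfolding c1_def using Np c0p by simp
  have bi: "isometric_on M d {0..} \<beta>" using mr unfolding morse_geodesic_def by (rule conjunct1)
  have gM: "\<gamma> t \<in> M" for t using iso_in[OF gi] by auto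
  have gd: "d (\<gamma> s) (\<gamma> t) = \<bar>s - t\<bar>" for s t using iso_d[OF gi] by auto
  have bM: "\<beta> w \<in> M" if "w \<ge> 0" for w using iso_in[OF bi] that by auto
  have bd: "d (\<beta> w) (\<beta> w') = \<bar>w - w'\<bar>" if "w \<ge> 0" "w' \<ge> 0" for w w' using iso_d[OF bi] that by auto
  have r0: "r \<ge> 0" using r by simp
  have key: "\<exists>s\<ge>T. s \<ge> 0 \<and> (\<exists>u\<ge>0. d (\<gamma> s) (\<beta> u) \<le> c0)" for T
  proof -
    obtain s where "s \<ge> max T 0" "\<exists>u\<ge>0. d (\<gamma> s) (\<beta> u) \<le> N 3 1"
      using liminf_close[OF mr gi geo HB, of "max T 0"] by blast
    then show ?thesis unfolding c0_def by auto
  qed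
  have mainQ: "\<exists>Q L. (\<forall>\<tau>\<in>{0..L}. \<exists>w\<ge>0. d (Q \<tau>) (\<beta> w) \<le> c1)
      \<and> quasigeodesic M d 3 (2 * c0) {0..L} Q \<and> Q 0 = e \<and> Q L = \<beta> u
      \<and> r + s \<le> L \<and> (\<forall>a\<in>{0..r}. Q a = g a) \<and> (\<forall>t\<in>{0..s}. Q (r + t) = \<gamma> t)
      \<and> (\<forall>\<tau>\<in>{0..L}. (\<exists>a\<in>{0..r}. Q \<tau> = g a) \<or> (\<exists>t\<in>{0..s}. Q \<tau> = \<gamma> t) \<or> d (Q \<tau>) (\<gamma> s) \<le> c0)"
    if s: "s \<ge> 0" and u: "u \<ge> 0" and du: "d (\<gamma> s) (\<beta> u) \<le> c0" for s u
  proof -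
    obtain Q L where QL: "quasigeodesic M d 3 (2 * c0) {0..L} Q" "Q 0 = e" "Q L = \<beta> u"
      "r + s \<le> L" "\<forall>a\<in>{0..r}. Q a = g a" "\<forall>t\<in>{0..s}. Q (r + t) = \<gamma> t"
      "\<forall>\<tau>\<in>{0..L}. (\<exists>a\<in>{0..r}. Q \<tau> = g a) \<or> (\<exists>t\<in>{0..s}. Q \<tau> = \<gamma> t) \<or> d (Q \<tau>) (\<gamma> s) \<le> c0"
      by (rule Qpath[OF bi gi geo cl eM g r s u du])
    have L0: "0 \<le> L" using QL(4) s r0 by simp
    have "\<forall>\<tau>\<in>{0..L}. \<exists>w\<in>{0..}. d (Q \<tau>) (\<beta> w) \<le> c1"
    proof
      fix \<tau> assume t: "\<tau> \<in> {0..L}"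
      show "\<exists>w\<in>{0..}. d (Q \<tau>) (\<beta> w) \<le> c1" unfolding c1_def
      proof (rule morse_conc[OF mr _ _ L0 QL(1)])
        show "Q 0 \<in> \<beta> ` {0..}" by (rule image_eqI[of _ _ 0]) (use QL(2) b0 in auto)
        show "Q L \<in> \<beta> ` {0..}" by (rule image_eqI[of _ _ u]) (use QL(3) u in auto)
      qed (use c0p t in auto)
    qed
    then have "\<forall>\<tau>\<in>{0..L}. \<exists>w\<ge>0. d (Q \<tau>) (\<beta> w) \<le> c1" by (meson atLeast_iff)
    then show ?thesis using QL by (intro exI[of _ Q] exI[of _ L] conjI) assumption+
  qed
  have F1: "\<forall>t\<ge>0. \<exists>u\<ge>0. d (\<gamma> t) (\<beta> u) \<le> c1"
  proof (intro allI impI)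
    fix t :: real assume t: "t \<ge> 0"
    obtain s u where su: "s \<ge> t" "s \<ge> 0" "u \<ge> 0" "d (\<gamma> s) (\<beta> u) \<le> c0" using key[of t] by blast
    obtain Q L where Q: "\<forall>\<tau>\<in>{0..L}. \<exists>w\<ge>0. d (Q \<tau>) (\<beta> w) \<le> c1"
      "r + s \<le> L" "\<forall>t\<in>{0..s}. Q (r + t) = \<gamma> t"
      using mainQ[OF su(2,3,4)] by blast
    have "r + t \<in> {0..L}" using Q(2) su t r0 by simp
    then obtain w where "w \<ge> 0" "d (Q (r + t)) (\<beta> w) \<le> c1" using Q(1) by blast
    then show "\<exists>u\<ge>0. d (\<gamma> t) (\<beta> u) \<le> c1" using Q(3) su t by auto
  qed
  have F2: "\<forall>a\<in>{0..r}. \<exists>u\<ge>0. d (g a) (\<beta> u) \<le> c1"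
  proof
    fix a assume a: "a \<in> {0..r}"
    obtain s u where su: "s \<ge> 0" "s \<ge> 0" "u \<ge> 0" "d (\<gamma> s) (\<beta> u) \<le> c0" using key[of 0] by blast
    obtain Q L where Q: "\<forall>\<tau>\<in>{0..L}. \<exists>w\<ge>0. d (Q \<tau>) (\<beta> w) \<le> c1"
      "r + s \<le> L" "\<forall>a\<in>{0..r}. Q a = g a"
      using mainQ[OF su(2,3,4)] by blast
    have "a \<in> {0..L}" using Q(2) su a by simp
    then obtain w where "w \<ge> 0" "d (Q a) (\<beta> w) \<le> c1" using Q(1) by blast
    then show "\<exists>u\<ge>0. d (g a) (\<beta> u) \<le> c1" using Q(3) a by auto
  qed
  define R2 where "R2 = 3 * c1 + 3 + 3 * c0"
  have F3: "\<forall>v\<ge>0. (\<exists>a\<in>{0..r}. d (\<beta> v) (g a) \<le> R2) \<or> (\<exists>t\<ge>0. d (\<beta> v) (\<gamma> t) \<le> R2)"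
  proof (intro allI impI)
    fix v :: real assume v: "v \<ge> 0"
    obtain s u where su: "s \<ge> v + r + c0" "s \<ge> 0" "u \<ge> 0" "d (\<gamma> s) (\<beta> u) \<le> c0"
      using key[of "v + r + c0"] by blast
    obtain Q L where Q: "\<forall>\<tau>\<in>{0..L}. \<exists>w\<ge>0. d (Q \<tau>) (\<beta> w) \<le> c1"
      "quasigeodesic M d 3 (2 * c0) {0..L} Q" "Q 0 = e" "Q L = \<beta> u" "r + s \<le> L"
      "\<forall>\<tau>\<in>{0..L}. (\<exists>a\<in>{0..r}. Q \<tau> = g a) \<or> (\<exists>t\<in>{0..s}. Q \<tau> = \<gamma> t) \<or> d (Q \<tau>) (\<gamma> s) \<le> c0"
      using mainQ[OF su(2,3,4)] by blast
    have L0: "L \<ge> 0" using Q(5) su r0 by simp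
    have uv: "v \<le> u"
    proof -
      have "d (\<gamma> 0) (\<gamma> s) \<le> d (\<gamma> 0) e + d e (\<gamma> s)" using triangle[of "\<gamma> 0" e "\<gamma> s"] gM eM by blast
      moreover have "d e (\<gamma> s) \<le> d e (\<beta> u) + d (\<beta> u) (\<gamma> s)" using triangle[of e "\<beta> u" "\<gamma> s"] gM eM bM[OF su(3)] by blast
      moreover have "d e (\<beta> u) = u" using bd[of 0 u] b0 su by simp
      ultimately show ?thesis using gd[of 0 s] su r commute[of "\<gamma> 0" e] commute[of "\<beta> u" "\<gamma> s"] by simp
    qed
    have cov: "\<exists>\<tau>\<in>{0..L}. d (\<beta> v) (Q \<tau>) \<le> 3 * c1 + (3 + 2 * c0)"
    proof (rule coverage[OF bi Q(1) _ _ _ Q(4) su(3) L0 v uv])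
      show "\<forall>\<tau>\<in>{0..L}. \<forall>\<tau>'\<in>{0..L}. \<bar>\<tau> - \<tau>'\<bar> \<le> 1 \<longrightarrow> d (Q \<tau>) (Q \<tau>') \<le> 3 + 2 * c0"
      proof (intro ballI impI)
        fix \<tau> \<tau>' assume h: "\<tau> \<in> {0..L}" "\<tau>' \<in> {0..L}" "\<bar>\<tau> - \<tau>'\<bar> \<le> 1"
        show "d (Q \<tau>) (Q \<tau>') \<le> 3 + 2 * c0" using quasi_up(2)[OF Q(2) h(1) h(2)] h(3) by (smt (verit))
      qed
      show "\<forall>\<tau>\<in>{0..L}. Q \<tau> \<in> M" using quasi_up(1)[OF Q(2)] by blast
      show "Q 0 = \<beta> 0" using Q(3) b0 by simp
    qed
    then obtain \<tau> where t: "\<tau> \<in> {0..L}" "d (\<beta> v) (Q \<tau>) \<le> 3 * c1 + (3 + 2 * c0)" by blast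
    have QtM: "Q \<tau> \<in> M" using quasi_up(1)[OF Q(2) t(1) t(1)] .
    consider "\<exists>a\<in>{0..r}. Q \<tau> = g a" | "\<exists>t\<in>{0..s}. Q \<tau> = \<gamma> t" | "d (Q \<tau>) (\<gamma> s) \<le> c0"
      using Q(6) t(1) by blast
    then show "(\<exists>a\<in>{0..r}. d (\<beta> v) (g a) \<le> R2) \<or> (\<exists>t\<ge>0. d (\<beta> v) (\<gamma> t) \<le> R2)"
    proof cases
      case 1
      then obtain a where a: "a \<in> {0..r}" "Q \<tau> = g a" by blast
      have "d (\<beta> v) (g a) \<le> R2" using a t(2) c0p c1p unfolding R2_def by simp
      then show ?thesis using a(1) by blast
    next
      case 2
      then obtain a where a: "a \<in> {0..s}" "Q \<tau> = \<gamma> a" by blast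
      have "d (\<beta> v) (\<gamma> a) \<le> R2" using a t(2) c0p c1p unfolding R2_def by simp
      moreover have "a \<ge> 0" using a by simp
      ultimately show ?thesis by blast
    next
      case 3
      have "d (\<beta> v) (\<gamma> s) \<le> d (\<beta> v) (Q \<tau>) + d (Q \<tau>) (\<gamma> s)" using triangle[of "\<beta> v" "Q \<tau>" "\<gamma> s"] bM[OF v] QtM gM by blast
      then have "d (\<beta> v) (\<gamma> s) \<le> R2" using 3 t unfolding R2_def by linarith
      then show ?thesis using su by blast
    qed
  qed
  show ?thesis using F1 F2 F3 unfolding c1_def c0_def R2_def by blast
qed

lemma center:
  fixes \<alpha> \<beta> \<gamma> \<gamma>' g :: "real \<Rightarrow> 'a" and r r' c1 R2 :: real
  assumes ai: "isometric_on M d {0..} \<alpha>" and bi: "isometric_on M d {0..} \<beta>"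
    and a0: "\<alpha> 0 = e" and b0: "\<beta> 0 = e" and eM: "e \<in> M"
    and gi: "isometric_on M d UNIV \<gamma>" and g: "isometric_on M d {0..r} g" "g 0 = e"
    and r: "r = d e (\<gamma> 0)"
    and F3p: "\<forall>v\<ge>0. (\<exists>a\<in>{0..r}. d (\<beta> v) (g a) \<le> R2) \<or> (\<exists>t\<ge>0. d (\<beta> v) (\<gamma> t) \<le> R2)"
    and F3m: "\<forall>v\<ge>0. (\<exists>a\<in>{0..r}. d (\<alpha> v) (g a) \<le> R2) \<or> (\<exists>t\<ge>0. d (\<alpha> v) (\<gamma> (- t)) \<le> R2)"
    and pM: "\<gamma>' 0 \<in> M" and r': "r' = d e (\<gamma>' 0)"
    and P1: "\<exists>u\<ge>0. d (\<gamma>' 0) (\<beta> u) \<le> c1" and P2: "\<exists>v\<ge>0. d (\<gamma>' 0) (\<alpha> v) \<le> c1"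
    and c1: "c1 \<ge> 0" and R2: "R2 \<ge> 0"
  shows "r' \<le> r + 3 * R2 + 3 * c1"
proof -
  have gM: "\<gamma> t \<in> M" for t using iso_in[OF gi] by auto
  have gd: "d (\<gamma> s) (\<gamma> t) = \<bar>s - t\<bar>" for s t using iso_d[OF gi] by auto
  have aM: "\<alpha> w \<in> M" if "w \<ge> 0" for w using iso_in[OF ai] that by auto
  have bM: "\<beta> w \<in> M" if "w \<ge> 0" for w using iso_in[OF bi] that by auto
  have ae: "d e (\<alpha> w) = w" if "w \<ge> 0" for w using iso_d[OF ai, of 0 w] a0 that by auto
  have be: "d e (\<beta> w) = w" if "w \<ge> 0" for w using iso_d[OF bi, of 0 w] b0 that by auto
  have gaM: "g a \<in> M" if "a \<in> {0..r}" for a using iso_in[OF g(1) that] .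
  have gae: "d e (g a) = a" if "a \<in> {0..r}" for a using iso_d[OF g(1), of 0 a] g(2) that by auto
  obtain u where u: "u \<ge> 0" "d (\<gamma>' 0) (\<beta> u) \<le> c1" using P1 by blast
  obtain v where v: "v \<ge> 0" "d (\<gamma>' 0) (\<alpha> v) \<le> c1" using P2 by blast
  have ru: "r' \<le> u + c1"
    using triangle[of e "\<beta> u" "\<gamma>' 0"] eM bM[OF u(1)] pM be[OF u(1)] u(2) r' commute[of "\<beta> u" "\<gamma>' 0"] by simp
  have rv: "r' \<le> v + c1"
    using triangle[of e "\<alpha> v" "\<gamma>' 0"] eM aM[OF v(1)] pM ae[OF v(1)] v(2) r' commute[of "\<alpha> v" "\<gamma>' 0"] by simp
  consider (A) a where "a \<in> {0..r}" "d (\<beta> u) (g a) \<le> R2" | (B) t1 where "t1 \<ge> 0" "d (\<beta> u) (\<gamma> t1) \<le> R2"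
    using F3p u(1) by blast
  then show ?thesis
  proof cases
    case A
    have "d e (\<beta> u) \<le> d e (g a) + d (g a) (\<beta> u)"
      using triangle[of e "g a" "\<beta> u"] eM gaM[OF A(1)] bM[OF u(1)] by blast
    then have "u \<le> r + R2" using A gae[OF A(1)] be[OF u(1)] commute[of "g a" "\<beta> u"] by auto
    then show ?thesis using ru c1 R2 by linarith
  next
    case B
    consider (A') a where "a \<in> {0..r}" "d (\<alpha> v) (g a) \<le> R2" | (B') t2 where "t2 \<ge> 0" "d (\<alpha> v) (\<gamma> (- t2)) \<le> R2"
      using F3m v(1) by blast
    then show ?thesis
    proof cases
      case A'
      have "d e (\<alpha> v) \<le> d e (g a) + d (g a) (\<alpha> v)"
        using triangle[of e "g a" "\<alpha> v"] eM gaM[OF A'(1)] aM[OF v(1)] by blast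
      then have "v \<le> r + R2" using A' gae[OF A'(1)] ae[OF v(1)] commute[of "g a" "\<alpha> v"] by auto
      then show ?thesis using rv c1 R2 by linarith
    next
      case B'
      have "d (\<gamma> t1) (\<gamma> (- t2)) \<le> d (\<gamma> t1) (\<beta> u) + d (\<beta> u) (\<gamma> (- t2))"
        using triangle[of "\<gamma> t1" "\<beta> u" "\<gamma> (- t2)"] gM bM[OF u(1)] by blast
      moreover have "d (\<beta> u) (\<gamma> (- t2)) \<le> d (\<beta> u) (\<gamma>' 0) + d (\<gamma>' 0) (\<gamma> (- t2))"
        using triangle[of "\<beta> u" "\<gamma>' 0" "\<gamma> (- t2)"] gM bM[OF u(1)] pM by blast
      moreover have "d (\<gamma>' 0) (\<gamma> (- t2)) \<le> d (\<gamma>' 0) (\<alpha> v) + d (\<alpha> v) (\<gamma> (- t2))"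
        using triangle[of "\<gamma>' 0" "\<alpha> v" "\<gamma> (- t2)"] gM aM[OF v(1)] pM by blast
      ultimately have "t1 + t2 \<le> 2 * R2 + 2 * c1"
        using gd[of t1 "- t2"] B B' u(2) v(2) commute[of "\<gamma> t1" "\<beta> u"] commute[of "\<beta> u" "\<gamma>' 0"] by simp
      have "d e (\<beta> u) \<le> d e (\<gamma> 0) + d (\<gamma> 0) (\<beta> u)"
        using triangle[of e "\<gamma> 0" "\<beta> u"] eM gM bM[OF u(1)] by blast
      moreover have "d (\<gamma> 0) (\<beta> u) \<le> d (\<gamma> 0) (\<gamma> t1) + d (\<gamma> t1) (\<beta> u)"
        using triangle[of "\<gamma> 0" "\<gamma> t1" "\<beta> u"] gM bM[OF u(1)] by blast
      ultimately have "u \<le> r + t1 + R2"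
        using be[OF u(1)] r gd[of 0 t1] B commute[of "\<gamma> t1" "\<beta> u"] by simp
      then show ?thesis using ru \<open>t1 + t2 \<le> 2 * R2 + 2 * c1\<close> B' by linarith
    qed
  qed
qed

lemma half:
  fixes \<beta> \<gamma> \<gamma>' g' :: "real \<Rightarrow> 'a" and r r' c1 R2 c8 :: real
  assumes bi: "isometric_on M d {0..} \<beta>" and eM: "e \<in> M"
    and gi: "isometric_on M d UNIV \<gamma>" and cl: "\<forall>t. d e (\<gamma> 0) \<le> d e (\<gamma> t)" and r: "r = d e (\<gamma> 0)"
    and g': "isometric_on M d {0..r'} g'" "g' 0 = e" "g' r' = \<gamma>' 0"
    and gi': "isometric_on M d UNIV \<gamma>'"
    and F1: "\<forall>t\<ge>0. \<exists>u\<ge>0. d (\<gamma> t) (\<beta> u) \<le> c1"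
    and F3': "\<forall>v\<ge>0. (\<exists>a\<in>{0..r'}. d (\<beta> v) (g' a) \<le> R2) \<or> (\<exists>t\<ge>0. d (\<beta> v) (\<gamma>' t) \<le> R2)"
    and cen: "r' \<le> r + c8" and c: "c1 \<ge> 0" "R2 \<ge> 0" "c8 \<ge> 0"
  shows "\<forall>t\<ge>0. \<exists>y\<in>range \<gamma>'. d (\<gamma> t) y \<le> 2 * (c1 + R2) + c8"
proof (intro allI impI)
  fix t :: real assume t: "t \<ge> 0"
  have gM: "\<gamma> t \<in> M" for t using iso_in[OF gi] by auto
  have gM': "\<gamma>' t \<in> M" for t using iso_in[OF gi'] by auto
  have bM: "\<beta> w \<in> M" if "w \<ge> 0" for w using iso_in[OF bi] that by auto
  obtain u where u: "u \<ge> 0" "d (\<gamma> t) (\<beta> u) \<le> c1" using F1 t by blast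
  consider (A) a where "a \<in> {0..r'}" "d (\<beta> u) (g' a) \<le> R2" | (B) t1 where "t1 \<ge> 0" "d (\<beta> u) (\<gamma>' t1) \<le> R2"
    using F3' u(1) by blast
  then show "\<exists>y\<in>range \<gamma>'. d (\<gamma> t) y \<le> 2 * (c1 + R2) + c8"
  proof cases
    case B
    have "d (\<gamma> t) (\<gamma>' t1) \<le> d (\<gamma> t) (\<beta> u) + d (\<beta> u) (\<gamma>' t1)"
      using triangle[of "\<gamma> t" "\<beta> u" "\<gamma>' t1"] gM gM' bM[OF u(1)] by blast
    then have "d (\<gamma> t) (\<gamma>' t1) \<le> 2 * (c1 + R2) + c8" using u(2) B c by (smt (verit))
    then show ?thesis by blast
  next
    case A
    have gaM: "g' a \<in> M" using iso_in[OF g'(1) A(1)] .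
    have r'0: "r' \<ge> 0" using A(1) by simp
    have gae: "d e (g' a) = a" using iso_d[OF g'(1), of 0 a] g'(2) A(1) by auto
    have gap: "d (g' a) (\<gamma>' 0) = r' - a" using iso_d[OF g'(1) A(1), of r'] g'(3) A(1) by auto
    have "d (\<gamma> t) (g' a) \<le> d (\<gamma> t) (\<beta> u) + d (\<beta> u) (g' a)"
      using triangle[of "\<gamma> t" "\<beta> u" "g' a"] gM gaM bM[OF u(1)] by blast
    then have c4: "d (\<gamma> t) (g' a) \<le> c1 + R2" using u(2) A by linarith
    have "d e (\<gamma> t) \<le> d e (g' a) + d (g' a) (\<gamma> t)" using triangle[of e "g' a" "\<gamma> t"] eM gaM gM by blast
    then have "r - (c1 + R2) \<le> a" using cl r gae c4 commute[of "g' a" "\<gamma> t"] by smt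
    then have g0: "d (g' a) (\<gamma>' 0) \<le> c8 + (c1 + R2)" using gap cen by linarith
    have "d (\<gamma> t) (\<gamma>' 0) \<le> d (\<gamma> t) (g' a) + d (g' a) (\<gamma>' 0)"
      using triangle[of "\<gamma> t" "g' a" "\<gamma>' 0"] gM gaM gM' by blast
    then have "d (\<gamma> t) (\<gamma>' 0) \<le> 2 * (c1 + R2) + c8" using c4 g0 by (smt (verit))
    then show ?thesis by blast
  qed
qed

lemma iso_rev: "isometric_on M d UNIV \<gamma> \<Longrightarrow> isometric_on M d UNIV (\<lambda>t. \<gamma> (- t))"
  unfolding isometric_on_def by (auto simp: abs_minus_commute)

lemma line_facts:
  fixes \<alpha> \<beta> \<gamma> :: "real \<Rightarrow> 'a" and Da Db :: real and N :: "real \<Rightarrow> real \<Rightarrow> real"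
  assumes ma: "morse_geodesic M d N {0..} \<alpha>" and a0: "\<alpha> 0 = e"
    and mb: "morse_geodesic M d N {0..} \<beta>" and b0: "\<beta> 0 = e"
    and gi: "isometric_on M d UNIV \<gamma>" and geo: "geodesic_space M d"
    and cl: "\<forall>t. d e (\<gamma> 0) \<le> d e (\<gamma> t)" and eM: "e \<in> M"
    and HBp: "\<forall>s\<ge>0. \<exists>u\<ge>0. d (\<gamma> s) (\<beta> u) \<le> Db"
    and HBm: "\<forall>s\<ge>0. \<exists>u\<ge>0. d (\<gamma> (- s)) (\<alpha> u) \<le> Da"
    and Np: "\<forall>K\<ge>1. \<forall>C\<ge>0. N K C \<ge> 0"
  obtains g r where "isometric_on M d {0..r} g" "g 0 = e" "g r = \<gamma> 0" "r = d e (\<gamma> 0)"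
    "\<forall>t\<ge>0. \<exists>u\<ge>0. d (\<gamma> t) (\<beta> u) \<le> N 3 (2 * N 3 1)"
    "\<forall>t\<ge>0. \<exists>u\<ge>0. d (\<gamma> (- t)) (\<alpha> u) \<le> N 3 (2 * N 3 1)"
    "\<forall>v\<ge>0. (\<exists>a\<in>{0..r}. d (\<beta> v) (g a) \<le> 3 * N 3 (2 * N 3 1) + 3 + 3 * N 3 1)
         \<or> (\<exists>t\<ge>0. d (\<beta> v) (\<gamma> t) \<le> 3 * N 3 (2 * N 3 1) + 3 + 3 * N 3 1)"
    "\<forall>v\<ge>0. (\<exists>a\<in>{0..r}. d (\<alpha> v) (g a) \<le> 3 * N 3 (2 * N 3 1) + 3 + 3 * N 3 1)
         \<or> (\<exists>t\<ge>0. d (\<alpha> v) (\<gamma> (- t)) \<le> 3 * N 3 (2 * N 3 1) + 3 + 3 * N 3 1)"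
proof -
  have g0M: "\<gamma> 0 \<in> M" using iso_in[OF gi] by auto
  obtain g where g: "g 0 = e" "g (d e (\<gamma> 0)) = \<gamma> 0" "isometric_on M d {0..d e (\<gamma> 0)} g"
    using geod[OF geo eM g0M] by blast
  define r where "r = d e (\<gamma> 0)"
  have gr: "isometric_on M d {0..r} g" "g 0 = e" "g r = \<gamma> 0" using g unfolding r_def by auto
  note FF1 = forward_facts[OF mb b0 gi geo cl eM gr r_def HBp Np]
  have gri: "isometric_on M d UNIV (\<lambda>t. \<gamma> (- t))" by (rule iso_rev[OF gi])
  have clr: "\<forall>t. d e ((\<lambda>t. \<gamma> (- t)) 0) \<le> d e ((\<lambda>t. \<gamma> (- t)) t)" using cl by simp
  have grr: "g r = (\<lambda>t. \<gamma> (- t)) 0" using gr(3) by simp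
  have rr: "r = d e ((\<lambda>t. \<gamma> (- t)) 0)" unfolding r_def by simp
  have HBm': "\<forall>s\<ge>0. \<exists>u\<ge>0. d ((\<lambda>t. \<gamma> (- t)) s) (\<alpha> u) \<le> Da" using HBm by simp
  note FF2 = forward_facts[OF ma a0 gri geo clr eM gr(1) gr(2) grr rr HBm' Np]
  show ?thesis
    apply (rule that[OF gr r_def])
       apply (rule conjunct1[OF FF1])
      apply (rule conjunct1[OF FF2])
     apply (rule conjunct2[OF conjunct2[OF FF1]])
    apply (rule conjunct2[OF conjunct2[OF FF2]])
    done
qed

end

lemma in_class:
  assumes ms: "Metric_space X d" and a: "morse_ray X d N e a"
  shows "a \<in> {b. morse_ray X d N e b \<and> haus_finite d (b ` {0..}) (a ` {0..})}"
proof -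
  have ai: "isometric_on X d {0..} a" using a unfolding morse_ray_def morse_geodesic_def by blast
  have "haus_le d (a ` {0..}) (a ` {0..}) 0"
    unfolding haus_le_def
  proof (intro conjI ballI)
    fix x assume "x \<in> a ` {0..}"
    moreover then have "x \<in> X" using iso_in[OF ai] by auto
    ultimately show "\<exists>b\<in>a ` {0..}. d x b \<le> 0" using Metric_space.mdist_zero[OF ms] by force
  next
    fix x assume "x \<in> a ` {0..}"
    moreover then have "x \<in> X" using iso_in[OF ai] by auto
    ultimately show "\<exists>b\<in>a ` {0..}. d b x \<le> 0" using Metric_space.mdist_zero[OF ms] by force
  qed
  then show ?thesis using a unfolding haus_finite_def by blast
qed

lemma fwd_HB:
  assumes "\<beta> \<in> lp" "forward_asymptotic d \<gamma> lp"
  shows "\<exists>D. \<forall>s\<ge>0. \<exists>u\<ge>0. d (\<gamma> s) (\<beta> u) \<le> D"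
proof -
  obtain D where "haus_le d (\<gamma> ` {0..}) (\<beta> ` {0..}) D"
    using assms unfolding forward_asymptotic_def haus_finite_def by blast
  then have "\<forall>x\<in>\<gamma> ` {0..}. \<exists>y\<in>\<beta> ` {0..}. d x y \<le> D" unfolding haus_le_def by blast
  then have "\<forall>s\<ge>0. \<exists>u\<ge>0. d (\<gamma> s) (\<beta> u) \<le> D" by auto
  then show ?thesis by blast
qed

lemma bwd_HB:
  assumes "\<alpha> \<in> lm" "backward_asymptotic d \<gamma> lm"
  shows "\<exists>D. \<forall>s\<ge>0. \<exists>u\<ge>0. d (\<gamma> (- s)) (\<alpha> u) \<le> D"
proof -
  obtain D where "haus_le d (\<gamma> ` {..0}) (\<alpha> ` {0..}) D"
    using assms unfolding backward_asymptotic_def haus_finite_def by blast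
  then have h: "\<forall>x\<in>\<gamma> ` {..0}. \<exists>y\<in>\<alpha> ` {0..}. d x y \<le> D" unfolding haus_le_def by blast
  have "\<forall>s\<ge>0. \<exists>u\<ge>0. d (\<gamma> (- s)) (\<alpha> u) \<le> D"
  proof (intro allI impI)
    fix s :: real assume "s \<ge> 0"
    then have "\<gamma> (- s) \<in> \<gamma> ` {..0}" by auto
    then obtain y where y: "y \<in> \<alpha> ` {0..}" "d (\<gamma> (- s)) y \<le> D" using h by blast
    then obtain u where "u \<ge> 0" "y = \<alpha> u" by auto
    then show "\<exists>u\<ge>0. d (\<gamma> (- s)) (\<alpha> u) \<le> D" using y(2) by blast
  qed
  then show ?thesis by blast
qed

lemma both_dirs:
  fixes \<alpha> \<beta> \<gamma> \<gamma>' g g' :: "real \<Rightarrow> 'a" and r r' c1 R2 c8 :: real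
  assumes ms: "Metric_space X d" and eM: "e \<in> X"
    and ai: "isometric_on X d {0..} \<alpha>" and bi: "isometric_on X d {0..} \<beta>"
    and gi: "isometric_on X d UNIV \<gamma>" and cl: "\<forall>t. d e (\<gamma> 0) \<le> d e (\<gamma> t)" and r: "r = d e (\<gamma> 0)"
    and gi': "isometric_on X d UNIV \<gamma>'"
    and g': "isometric_on X d {0..r'} g'" "g' 0 = e" "g' r' = \<gamma>' 0"
    and F1p: "\<forall>t\<ge>0. \<exists>u\<ge>0. d (\<gamma> t) (\<beta> u) \<le> c1"
    and F1m: "\<forall>t\<ge>0. \<exists>u\<ge>0. d (\<gamma> (- t)) (\<alpha> u) \<le> c1"
    and F3p: "\<forall>v\<ge>0. (\<exists>a\<in>{0..r'}. d (\<beta> v) (g' a) \<le> R2) \<or> (\<exists>t\<ge>0. d (\<beta> v) (\<gamma>' t) \<le> R2)"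
    and F3m: "\<forall>v\<ge>0. (\<exists>a\<in>{0..r'}. d (\<alpha> v) (g' a) \<le> R2) \<or> (\<exists>t\<ge>0. d (\<alpha> v) (\<gamma>' (- t)) \<le> R2)"
    and cen: "r' \<le> r + c8" and c: "c1 \<ge> 0" "R2 \<ge> 0" "c8 \<ge> 0"
  shows "\<forall>x\<in>range \<gamma>. \<exists>y\<in>range \<gamma>'. d x y \<le> 2 * (c1 + R2) + c8"
proof -
  have H1: "\<forall>t\<ge>0. \<exists>y\<in>range \<gamma>'. d (\<gamma> t) y \<le> 2 * (c1 + R2) + c8"
    by (rule Metric_space.half[OF ms bi eM gi cl r g' gi' F1p F3p cen c])
  have gri: "isometric_on X d UNIV (\<lambda>t. \<gamma> (- t))" by (rule Metric_space.iso_rev[OF ms gi])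
  have gri': "isometric_on X d UNIV (\<lambda>t. \<gamma>' (- t))" by (rule Metric_space.iso_rev[OF ms gi'])
  have clr: "\<forall>t. d e ((\<lambda>t. \<gamma> (- t)) 0) \<le> d e ((\<lambda>t. \<gamma> (- t)) t)" using cl by simp
  have rr: "r = d e ((\<lambda>t. \<gamma> (- t)) 0)" using r by simp
  have grr: "g' r' = (\<lambda>t. \<gamma>' (- t)) 0" using g'(3) by simp
  have H2: "\<forall>t\<ge>0. \<exists>y\<in>range (\<lambda>t. \<gamma>' (- t)). d (\<gamma> (- t)) y \<le> 2 * (c1 + R2) + c8"
    by (rule Metric_space.half[OF ms ai eM gri clr rr g'(1) g'(2) grr gri' F1m F3m cen c])
  have rg: "range (\<lambda>t. \<gamma>' (- t)) = range \<gamma>'"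
  proof
    show "range (\<lambda>t. \<gamma>' (- t)) \<subseteq> range \<gamma>'" by auto
    show "range \<gamma>' \<subseteq> range (\<lambda>t. \<gamma>' (- t))"
    proof
      fix y assume "y \<in> range \<gamma>'"
      then obtain s where "y = \<gamma>' s" by auto
      then have "y = (\<lambda>t. \<gamma>' (- t)) (- s)" by simp
      then show "y \<in> range (\<lambda>t. \<gamma>' (- t))" by blast
    qed
  qed
  show ?thesis
  proof
    fix x assume "x \<in> range \<gamma>"
    then obtain t where t: "x = \<gamma> t" by auto
    show "\<exists>y\<in>range \<gamma>'. d x y \<le> 2 * (c1 + R2) + c8"
    proof (cases "t \<ge> 0")
      case True then show ?thesis using H1 t by blast
    next
      case False
      then have "- t \<ge> 0" by simp
      then obtain y where "y \<in> range (\<lambda>t. \<gamma>' (- t))" "d (\<gamma> (- (- t))) y \<le> 2 * (c1 + R2) + c8"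
        using H2 by blast
      then show ?thesis using t rg by auto
    qed
  qed
qed

theorem proposition3p12:
  fixes N :: "real \<Rightarrow> real \<Rightarrow> real"
  assumes "\<forall>K\<ge>1. \<forall>C\<ge>0. N K C \<ge> 0"
  shows "\<exists>K2>0. \<forall>(X::'a set) d e lm lp \<gamma> \<gamma>'.
     proper_metric X d \<longrightarrow> geodesic_space X d \<longrightarrow> e \<in> X \<longrightarrow>
     lm \<in> morse_boundary X d N e \<longrightarrow> lp \<in> morse_boundary X d N e \<longrightarrow> lm \<noteq> lp \<longrightarrow>
     isometric_on X d UNIV \<gamma> \<longrightarrow> isometric_on X d UNIV \<gamma>' \<longrightarrow>
     (\<forall>t. d e (\<gamma> 0) \<le> d e (\<gamma> t)) \<longrightarrow> (\<forall>t. d e (\<gamma>' 0) \<le> d e (\<gamma>' t)) \<longrightarrow>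
     bi_asymptotic d \<gamma> lm lp \<longrightarrow> bi_asymptotic d \<gamma>' lm lp \<longrightarrow>
     haus_less d (range \<gamma>) (range \<gamma>') K2"
proof -
  note Np = assms
  define c1 where "c1 = N 3 (2 * N 3 1)"
  define R2 where "R2 = 3 * N 3 (2 * N 3 1) + 3 + 3 * N 3 1"
  define c8 where "c8 = 3 * R2 + 3 * c1"
  define B where "B = 2 * (c1 + R2) + c8"
  have c0p: "N 3 1 \<ge> 0" using Np by simp
  have c1p: "c1 \<ge> 0" unfolding c1_def using Np c0p by simp
  have R2p: "R2 \<ge> 0" unfolding R2_def using c1p c0p unfolding c1_def by simp
  have c8p: "c8 \<ge> 0" unfolding c8_def using c1p R2p by simp
  have Bp: "B \<ge> 0" unfolding B_def using c1p R2p c8p by simp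
  show ?thesis
  proof (rule exI[of _ "B + 1"], intro conjI allI impI)
    show "B + 1 > 0" using Bp by simp
    fix X :: "'a set" and d e lm lp and \<gamma> \<gamma>' :: "real \<Rightarrow> 'a"
    assume pm: "proper_metric X d" and geo: "geodesic_space X d" and eM: "e \<in> X"
      and lmB: "lm \<in> morse_boundary X d N e" and lpB: "lp \<in> morse_boundary X d N e"
      and "lm \<noteq> lp" and gi: "isometric_on X d UNIV \<gamma>" and gi': "isometric_on X d UNIV \<gamma>'"
      and cl: "\<forall>t. d e (\<gamma> 0) \<le> d e (\<gamma> t)" and cl': "\<forall>t. d e (\<gamma>' 0) \<le> d e (\<gamma>' t)"
      and ba: "bi_asymptotic d \<gamma> lm lp" and ba': "bi_asymptotic d \<gamma>' lm lp"
    have ms: "Metric_space X d" using pm unfolding proper_metric_def by (rule conjunct1)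
    obtain \<alpha> where \<alpha>: "morse_ray X d N e \<alpha>"
      and lmd: "lm = {b. morse_ray X d N e b \<and> haus_finite d (b ` {0..}) (\<alpha> ` {0..})}"
      using lmB unfolding morse_boundary_def by blast
    obtain \<beta> where \<beta>: "morse_ray X d N e \<beta>"
      and lpd: "lp = {b. morse_ray X d N e b \<and> haus_finite d (b ` {0..}) (\<beta> ` {0..})}"
      using lpB unfolding morse_boundary_def by blast
    have \<alpha>lm: "\<alpha> \<in> lm" unfolding lmd by (rule in_class[OF ms \<alpha>])
    have \<beta>lp: "\<beta> \<in> lp" unfolding lpd by (rule in_class[OF ms \<beta>])
    have ma: "morse_geodesic X d N {0..} \<alpha>" and a0: "\<alpha> 0 = e"
      using \<alpha> unfolding morse_ray_def by auto
    have mb: "morse_geodesic X d N {0..} \<beta>" and b0: "\<beta> 0 = e"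
      using \<beta> unfolding morse_ray_def by auto
    have ai: "isometric_on X d {0..} \<alpha>" using ma unfolding morse_geodesic_def by (rule conjunct1)
    have bi: "isometric_on X d {0..} \<beta>" using mb unfolding morse_geodesic_def by (rule conjunct1)
    obtain Db where HBp: "\<forall>s\<ge>0. \<exists>u\<ge>0. d (\<gamma> s) (\<beta> u) \<le> Db"
      using fwd_HB[OF \<beta>lp] ba unfolding bi_asymptotic_def by blast
    obtain Da where HBm: "\<forall>s\<ge>0. \<exists>u\<ge>0. d (\<gamma> (- s)) (\<alpha> u) \<le> Da"
      using bwd_HB[OF \<alpha>lm] ba unfolding bi_asymptotic_def by blast
    obtain Db' where HBp': "\<forall>s\<ge>0. \<exists>u\<ge>0. d (\<gamma>' s) (\<beta> u) \<le> Db'"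
      using fwd_HB[OF \<beta>lp] ba' unfolding bi_asymptotic_def by blast
    obtain Da' where HBm': "\<forall>s\<ge>0. \<exists>u\<ge>0. d (\<gamma>' (- s)) (\<alpha> u) \<le> Da'"
      using bwd_HB[OF \<alpha>lm] ba' unfolding bi_asymptotic_def by blast
    obtain g r where L1: "isometric_on X d {0..r} g" "g 0 = e" "g r = \<gamma> 0" "r = d e (\<gamma> 0)"
      "\<forall>t\<ge>0. \<exists>u\<ge>0. d (\<gamma> t) (\<beta> u) \<le> c1"
      "\<forall>t\<ge>0. \<exists>u\<ge>0. d (\<gamma> (- t)) (\<alpha> u) \<le> c1"
      "\<forall>v\<ge>0. (\<exists>a\<in>{0..r}. d (\<beta> v) (g a) \<le> R2) \<or> (\<exists>t\<ge>0. d (\<beta> v) (\<gamma> t) \<le> R2)"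
      "\<forall>v\<ge>0. (\<exists>a\<in>{0..r}. d (\<alpha> v) (g a) \<le> R2) \<or> (\<exists>t\<ge>0. d (\<alpha> v) (\<gamma> (- t)) \<le> R2)"
      unfolding c1_def R2_def by (rule Metric_space.line_facts[OF ms ma a0 mb b0 gi geo cl eM HBp HBm Np])
    obtain g' r' where L2: "isometric_on X d {0..r'} g'" "g' 0 = e" "g' r' = \<gamma>' 0" "r' = d e (\<gamma>' 0)"
      "\<forall>t\<ge>0. \<exists>u\<ge>0. d (\<gamma>' t) (\<beta> u) \<le> c1"
      "\<forall>t\<ge>0. \<exists>u\<ge>0. d (\<gamma>' (- t)) (\<alpha> u) \<le> c1"
      "\<forall>v\<ge>0. (\<exists>a\<in>{0..r'}. d (\<beta> v) (g' a) \<le> R2) \<or> (\<exists>t\<ge>0. d (\<beta> v) (\<gamma>' t) \<le> R2)"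
      "\<forall>v\<ge>0. (\<exists>a\<in>{0..r'}. d (\<alpha> v) (g' a) \<le> R2) \<or> (\<exists>t\<ge>0. d (\<alpha> v) (\<gamma>' (- t)) \<le> R2)"
      unfolding c1_def R2_def by (rule Metric_space.line_facts[OF ms ma a0 mb b0 gi' geo cl' eM HBp' HBm' Np])
    have p0: "\<gamma> 0 \<in> X" "\<gamma>' 0 \<in> X" using iso_in[OF gi] iso_in[OF gi'] by auto
    have P1: "\<exists>u\<ge>0. d (\<gamma>' 0) (\<beta> u) \<le> c1" using L2(5) by auto
    have P2: "\<exists>u\<ge>0. d (\<gamma>' 0) (\<alpha> u) \<le> c1" using L2(6) by (metis minus_zero order_refl)
    have Q1: "\<exists>u\<ge>0. d (\<gamma> 0) (\<beta> u) \<le> c1" using L1(5) by auto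
    have Q2: "\<exists>u\<ge>0. d (\<gamma> 0) (\<alpha> u) \<le> c1" using L1(6) by (metis minus_zero order_refl)
    have cen1: "r' \<le> r + c8" unfolding c8_def
      using Metric_space.center[where \<gamma>=\<gamma> and \<gamma>'=\<gamma>' and g=g and r=r and r'=r', OF ms ai bi a0 b0 eM gi L1(1) L1(2) L1(4) L1(7) L1(8) p0(2) L2(4) P1 P2 c1p R2p] by linarith
    have cen2: "r \<le> r' + c8" unfolding c8_def
      using Metric_space.center[where \<gamma>=\<gamma>' and \<gamma>'=\<gamma> and g=g' and r=r' and r'=r, OF ms ai bi a0 b0 eM gi' L2(1) L2(2) L2(4) L2(7) L2(8) p0(1) L1(4) Q1 Q2 c1p R2p] by linarith
    have D1: "\<forall>x\<in>range \<gamma>. \<exists>y\<in>range \<gamma>'. d x y \<le> B" unfolding B_def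
      by (rule both_dirs[OF ms eM ai bi gi cl L1(4) gi' L2(1) L2(2) L2(3) L1(5) L1(6) L2(7) L2(8) cen1 c1p R2p c8p])
    have D2: "\<forall>x\<in>range \<gamma>'. \<exists>y\<in>range \<gamma>. d x y \<le> B" unfolding B_def
      by (rule both_dirs[OF ms eM ai bi gi' cl' L2(4) gi L1(1) L1(2) L1(3) L2(5) L2(6) L1(7) L1(8) cen2 c1p R2p c8p])
    have "haus_le d (range \<gamma>) (range \<gamma>') B"
      unfolding haus_le_def
    proof (intro conjI)
      show "\<forall>a\<in>range \<gamma>. \<exists>b\<in>range \<gamma>'. d a b \<le> B" by (rule D1)
      show "\<forall>b\<in>range \<gamma>'. \<exists>a\<in>range \<gamma>. d a b \<le> B"
      proof
        fix b assume "b \<in> range \<gamma>'"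
        then obtain a where "a \<in> range \<gamma>" "d b a \<le> B" using D2 by blast
        then show "\<exists>a\<in>range \<gamma>. d a b \<le> B" using Metric_space.commute[OF ms, of b a] by auto
      qed
    qed
    then show "haus_less d (range \<gamma>) (range \<gamma>') (B + 1)" unfolding haus_less_def
      by (intro exI[of _ B]) simp
  qed
qed

end
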